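(* Let $F$ be an indexed group with degree map $\deg$, $G$ a group, $H\le G$, and $\Phi$ a set of homomorphisms $F\to G$ satisfying: (I) if $h\in H$ and $\varphi\in\Phi$ then $f\mapsto h^{-1}\varphi(f)h$ lies in $\Phi$; (II) for any $\varphi\in\Phi$ and $h\in H_\varphi$, the homomorphism $\psi$ with $\psi(f)=\varphi(f)$ for $\deg f=0$ and $\psi(f_1)=\varphi(f_1)h$ for a degree-one element $f_1$ lies in $\Phi$. Then each similarity class in $\Phi$ consists of exactly $|H|$ elements. More precisely, for each $\varphi\in\Phi$: 1) the number of distinct tails of elements of $\Phi$ similar to $\varphi$ equals $|H:H_\varphi|$; 2) for each $\psi\in\Phi$ similar to $\varphi$, the number of elements of $\Phi$ with the same tail as $\psi$ equals $|H_\varphi|$.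
   Context: An indexed group is a group $F$ with a surjective homomorphism $\deg: F\to\mathbb{Z}$. Notation: $x^y=y^{-1}xy$, $H^y=y^{-1}Hy$, $C(X)$ is the centraliser. The $\varphi$-core of $H$ is $H_\varphi=\bigcap_{f\in F}H^{\varphi(f)}\cap C(\{\varphi(f)\mid\deg f=0\})$. The tail of $\varphi\in\Phi$ is the pair $(\varphi_0,\varphi_H)$, where $\varphi_0$ is the restriction of $\varphi$ to $\ker\deg$ and $\varphi_H$ is the map from $F$ to the set of left cosets of $H$ in $G$ sending $f$ to $\varphi(f)H$. Two homomorphisms $\varphi,\psi\in\Phi$ are similar if there is $h\in H$ with $\psi(f)=h\varphi(f)h^{-1}$ for all $f$ of degree zero and $\psi(f)H=h\varphi(f)H$ for all $f\in F$. Cardinalities are cardinal numbers (groups need not be finite). *)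

theory Defs
  imports "HOL-Algebra.Elementary_Groups" "HOL-Library.Equipollence"
begin

definition indexed_group :: "('f, 'm) monoid_scheme \<Rightarrow> ('f \<Rightarrow> int) \<Rightarrow> bool" where
  "indexed_group F deg \<longleftrightarrow> group F \<and> deg \<in> hom F integer_group \<and> deg ` carrier F = UNIV"

definition conj_set :: "('g, 'n) monoid_scheme \<Rightarrow> 'g set \<Rightarrow> 'g \<Rightarrow> 'g set" where
  "conj_set G H y = (\<lambda>x. inv\<^bsub>G\<^esub> y \<otimes>\<^bsub>G\<^esub> x \<otimes>\<^bsub>G\<^esub> y) ` H"

definition phi_core :: "('f, 'm) monoid_scheme \<Rightarrow> ('f \<Rightarrow> int) \<Rightarrow> ('g, 'n) monoid_scheme
    \<Rightarrow> 'g set \<Rightarrow> ('f \<Rightarrow> 'g) \<Rightarrow> 'g set" where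
  "phi_core F deg G H \<phi> =
     (\<Inter>f\<in>carrier F. conj_set G H (\<phi> f)) \<inter>
     {x \<in> carrier G. \<forall>f\<in>carrier F. deg f = 0 \<longrightarrow> x \<otimes>\<^bsub>G\<^esub> \<phi> f = \<phi> f \<otimes>\<^bsub>G\<^esub> x}"

definition tail :: "('f, 'm) monoid_scheme \<Rightarrow> ('f \<Rightarrow> int) \<Rightarrow> ('g, 'n) monoid_scheme
    \<Rightarrow> 'g set \<Rightarrow> ('f \<Rightarrow> 'g) \<Rightarrow> ('f \<Rightarrow> 'g) \<times> ('f \<Rightarrow> 'g set)" where
  "tail F deg G H \<phi> =
     (restrict \<phi> {f \<in> carrier F. deg f = 0}, restrict (\<lambda>f. \<phi> f <#\<^bsub>G\<^esub> H) (carrier F))"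

definition similar :: "('f, 'm) monoid_scheme \<Rightarrow> ('f \<Rightarrow> int) \<Rightarrow> ('g, 'n) monoid_scheme
    \<Rightarrow> 'g set \<Rightarrow> ('f \<Rightarrow> 'g) \<Rightarrow> ('f \<Rightarrow> 'g) \<Rightarrow> bool" where
  "similar F deg G H \<phi> \<psi> \<longleftrightarrow>
     (\<exists>h\<in>H. (\<forall>f\<in>carrier F. deg f = 0 \<longrightarrow> \<psi> f = h \<otimes>\<^bsub>G\<^esub> \<phi> f \<otimes>\<^bsub>G\<^esub> inv\<^bsub>G\<^esub> h) \<and>
            (\<forall>f\<in>carrier F. \<psi> f <#\<^bsub>G\<^esub> H = (h \<otimes>\<^bsub>G\<^esub> \<phi> f) <#\<^bsub>G\<^esub> H))"

text \<open>Set of left cosets of K in H (K a subgroup of H); its cardinality is the index |H:K|.\<close>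
definition lcosets_in :: "('g, 'n) monoid_scheme \<Rightarrow> 'g set \<Rightarrow> 'g set \<Rightarrow> 'g set set" where
  "lcosets_in G H K = {h <#\<^bsub>G\<^esub> K | h. h \<in> H}"

end

theory Submission
  imports Defs "HOL-Algebra.Left_Coset"
begin

lemma fiber_eqpoll:
  assumes "\<And>b. b \<in> f ` A \<Longrightarrow> {a\<in>A. f a = b} \<approx> K"
  shows "A \<approx> f ` A \<times> K"
proof -
  obtain g where g: "\<And>b. b \<in> f ` A \<Longrightarrow> bij_betw (g b) {a\<in>A. f a = b} K"
    using assms unfolding eqpoll_def by metis
  have "bij_betw (\<lambda>a. (f a, g (f a) a)) A (f ` A \<times> K)"
    unfolding bij_betw_def
  proof
    show "inj_on (\<lambda>a. (f a, g (f a) a)) A"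
    proof (rule inj_onI)
      fix a a' assume a: "a \<in> A" "a' \<in> A" "(f a, g (f a) a) = (f a', g (f a') a')"
      then have e: "f a = f a'" "g (f a) a = g (f a) a'" by auto
      have "inj_on (g (f a)) {x\<in>A. f x = f a}" using g[of "f a"] a(1) bij_betw_def by blast
      moreover have "a \<in> {x\<in>A. f x = f a}" "a' \<in> {x\<in>A. f x = f a}" using a e by auto
      ultimately show "a = a'" using e(2) by (meson inj_onD)
    qed
    show "(\<lambda>a. (f a, g (f a) a)) ` A = f ` A \<times> K"
    proof
      show "(\<lambda>a. (f a, g (f a) a)) ` A \<subseteq> f ` A \<times> K"
      proof (rule image_subsetI)
        fix a assume a: "a \<in> A"
        then have "a \<in> {x\<in>A. f x = f a}" by simp
        then have "g (f a) a \<in> K" using g[of "f a"] a bij_betwE by blast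
        then show "(f a, g (f a) a) \<in> f ` A \<times> K" using a by blast
      qed
      show "f ` A \<times> K \<subseteq> (\<lambda>a. (f a, g (f a) a)) ` A"
      proof (rule subsetI)
        fix p assume "p \<in> f ` A \<times> K"
        then obtain b k where p: "p = (f b, k)" "b \<in> A" "k \<in> K" by blast
        have "K = g (f b) ` {x\<in>A. f x = f b}" using g[of "f b"] p(2) bij_betw_imp_surj_on by blast
        then obtain a where a: "a \<in> A" "f a = f b" "k = g (f b) a" using p(3) by blast
        then have "p = (f a, g (f a) a)" using p by simp
        then show "p \<in> (\<lambda>a. (f a, g (f a) a)) ` A" using a(1) by blast
      qed
    qed
  qed
  then show ?thesis unfolding eqpoll_def by blast
qed

lemma same_kernel_eqpoll:
  assumes "\<And>a b. a \<in> A \<Longrightarrow> b \<in> A \<Longrightarrow> f a = f b \<longleftrightarrow> g a = g b"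
  shows "f ` A \<approx> g ` A"
proof -
  have key: "g (inv_into A f (f a)) = g a" if a: "a \<in> A" for a
  proof -
    have "inv_into A f (f a) \<in> A" using a by (simp add: inv_into_into)
    moreover have "f (inv_into A f (f a)) = f a" using a by (simp add: f_inv_into_f)
    ultimately show ?thesis using assms a by blast
  qed
  have "bij_betw (\<lambda>x. g (inv_into A f x)) (f ` A) (g ` A)"
    unfolding bij_betw_def
  proof
    show "inj_on (\<lambda>x. g (inv_into A f x)) (f ` A)"
    proof (rule inj_onI)
      fix x y assume "x \<in> f ` A" "y \<in> f ` A" "g (inv_into A f x) = g (inv_into A f y)"
      then obtain a b where ab: "a \<in> A" "b \<in> A" "x = f a" "y = f b" "g (inv_into A f (f a)) = g (inv_into A f (f b))"
        by blast
      then have "g a = g b" using key by simp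
      then show "x = y" using assms ab by blast
    qed
    have "(\<lambda>x. g (inv_into A f x)) ` f ` A = (\<lambda>a. g (inv_into A f (f a))) ` A" by (simp add: image_image)
    also have "\<dots> = g ` A" using key by (rule image_cong[OF refl])
    finally show "(\<lambda>x. g (inv_into A f x)) ` f ` A = g ` A" .
  qed
  then show ?thesis unfolding eqpoll_def by blast
qed

locale S = G: group G + F: group F
  for G :: "('g,'n) monoid_scheme" (structure) and F :: "('f,'m) monoid_scheme" +
  fixes deg :: "'f \<Rightarrow> int" and H :: "'g set" and \<Phi> :: "('f \<Rightarrow> 'g) set" and f1 :: 'f
  assumes deg: "deg \<in> hom F integer_group"
    and f1: "f1 \<in> carrier F" "deg f1 = 1"
    and subH: "subgroup H G"
    and Phi_hom: "\<Phi> \<subseteq> hom F G \<inter> extensional (carrier F)"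
    and I: "\<And>h \<phi>. h \<in> H \<Longrightarrow> \<phi> \<in> \<Phi> \<Longrightarrow>
              restrict (\<lambda>f. inv h \<otimes> \<phi> f \<otimes> h) (carrier F) \<in> \<Phi>"
    and II: "\<And>\<phi> h \<psi> f1. \<phi> \<in> \<Phi> \<Longrightarrow> h \<in> phi_core F deg G H \<phi> \<Longrightarrow>
              \<psi> \<in> hom F G \<inter> extensional (carrier F) \<Longrightarrow>
              (\<forall>f\<in>carrier F. deg f = 0 \<longrightarrow> \<psi> f = \<phi> f) \<Longrightarrow>
              f1 \<in> carrier F \<Longrightarrow> deg f1 = 1 \<Longrightarrow> \<psi> f1 = \<phi> f1 \<otimes> h \<Longrightarrow> \<psi> \<in> \<Phi>"
begin

lemma ghom: "\<chi> \<in> hom F G \<Longrightarrow> group_hom F G \<chi>"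
  unfolding group_hom_def group_hom_axioms_def using F.group_axioms G.group_axioms by blast

lemma deg_ghom: "group_hom F integer_group deg"
  unfolding group_hom_def group_hom_axioms_def using F.group_axioms group_integer_group deg by blast

lemma deg_mult: "a \<in> carrier F \<Longrightarrow> b \<in> carrier F \<Longrightarrow> deg (a \<otimes>\<^bsub>F\<^esub> b) = deg a + deg b"
  using group_hom.hom_mult[OF deg_ghom] by simp

lemma deg_inv: "a \<in> carrier F \<Longrightarrow> deg (inv\<^bsub>F\<^esub> a) = - deg a"
  using group_hom.hom_inv[OF deg_ghom] by simp

lemma deg_pow: "deg (f1 [^]\<^bsub>F\<^esub> (n::int)) = n"
  using group_hom.hom_int_pow[OF deg_ghom f1(1)] f1 by simp

definition f0 where "f0 a = a \<otimes>\<^bsub>F\<^esub> f1 [^]\<^bsub>F\<^esub> (- deg a)"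

lemma f0_carrier: "a \<in> carrier F \<Longrightarrow> f0 a \<in> carrier F"
  using f1 by (simp add: f0_def)

lemma f0_deg: "a \<in> carrier F \<Longrightarrow> deg (f0 a) = 0"
  using f1 by (simp add: f0_def deg_mult deg_pow)

lemma f0_decomp: "a \<in> carrier F \<Longrightarrow> a = f0 a \<otimes>\<^bsub>F\<^esub> f1 [^]\<^bsub>F\<^esub> deg a"
proof -
  assume a: "a \<in> carrier F"
  have "f1 [^]\<^bsub>F\<^esub> (- deg a) \<otimes>\<^bsub>F\<^esub> f1 [^]\<^bsub>F\<^esub> deg a = \<one>\<^bsub>F\<^esub>"
    using f1(1) by (simp add: F.int_pow_neg)
  then show ?thesis using a f1(1) unfolding f0_def by (simp add: F.m_assoc)
qed

lemma hom_decomp: "\<chi> \<in> hom F G \<Longrightarrow> a \<in> carrier F \<Longrightarrow> \<chi> a = \<chi> (f0 a) \<otimes> \<chi> f1 [^] deg a"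
proof -
  assume \<chi>: "\<chi> \<in> hom F G" and a: "a \<in> carrier F"
  have "\<chi> a = \<chi> (f0 a \<otimes>\<^bsub>F\<^esub> f1 [^]\<^bsub>F\<^esub> deg a)" using f0_decomp[OF a] by simp
  also have "\<dots> = \<chi> (f0 a) \<otimes> \<chi> (f1 [^]\<^bsub>F\<^esub> deg a)"
    using hom_mult[OF \<chi>] f0_carrier[OF a] f1(1) by simp
  also have "\<chi> (f1 [^]\<^bsub>F\<^esub> deg a) = \<chi> f1 [^] deg a"
    using group_hom.hom_int_pow[OF ghom[OF \<chi>] f1(1)] .
  finally show ?thesis .
qed

lemma hom_eq:
  assumes "\<chi> \<in> hom F G \<inter> extensional (carrier F)" "\<psi> \<in> hom F G \<inter> extensional (carrier F)"
    "\<forall>c\<in>carrier F. deg c = 0 \<longrightarrow> \<chi> c = \<psi> c" "\<chi> f1 = \<psi> f1"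
  shows "\<chi> = \<psi>"
proof (rule extensionalityI[of _ "carrier F"])
  show "\<chi> \<in> extensional (carrier F)" "\<psi> \<in> extensional (carrier F)" using assms(1,2) by auto
  fix a assume a: "a \<in> carrier F"
  have "\<chi> a = \<chi> (f0 a) \<otimes> \<chi> f1 [^] deg a" using assms(1) a hom_decomp by blast
  also have "\<chi> (f0 a) = \<psi> (f0 a)" using assms(3) f0_carrier[OF a] f0_deg[OF a] by blast
  also have "\<psi> (f0 a) \<otimes> \<chi> f1 [^] deg a = \<psi> a" using assms(2,4) hom_decomp[of \<psi> a] a by simp
  finally show "\<chi> a = \<psi> a" .
qed

lemma lcos_eq_iff:
  assumes K: "subgroup K G" and x: "x \<in> carrier G" and y: "y \<in> carrier G"
  shows "x <# K = y <# K \<longleftrightarrow> inv y \<otimes> x \<in> K"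
proof
  have Kc: "\<And>u. u \<in> K \<Longrightarrow> u \<in> carrier G" by (rule subgroup.mem_carrier[OF K])
  assume e: "x <# K = y <# K"
  have "x \<otimes> \<one> \<in> x <# K" using subgroup.one_closed[OF K] unfolding l_coset_def by blast
  then have "x \<in> y <# K" using e x by simp
  then obtain u where u: "u \<in> K" "x = y \<otimes> u" unfolding l_coset_def by blast
  then have "inv y \<otimes> x = u" using y Kc[OF u(1)] by (simp add: G.m_assoc[symmetric])
  then show "inv y \<otimes> x \<in> K" using u by simp
next
  have Kc: "\<And>u. u \<in> K \<Longrightarrow> u \<in> carrier G" by (rule subgroup.mem_carrier[OF K])
  assume k: "inv y \<otimes> x \<in> K"
  show "x <# K = y <# K"
  proof
    show "x <# K \<subseteq> y <# K"
    proof
      fix w assume "w \<in> x <# K"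
      then obtain u where u: "u \<in> K" "w = x \<otimes> u" unfolding l_coset_def by blast
      have "w = y \<otimes> ((inv y \<otimes> x) \<otimes> u)"
        using u x y Kc[OF u(1)] by (simp add: G.m_assoc[symmetric])
      moreover have "(inv y \<otimes> x) \<otimes> u \<in> K" using k u subgroup.m_closed[OF K] by blast
      ultimately show "w \<in> y <# K" unfolding l_coset_def by blast
    qed
    show "y <# K \<subseteq> x <# K"
    proof
      fix w assume "w \<in> y <# K"
      then obtain u where u: "u \<in> K" "w = y \<otimes> u" unfolding l_coset_def by blast
      have "inv (inv y \<otimes> x) = inv x \<otimes> y" using x y by (simp add: G.inv_mult_group)
      then have "inv x \<otimes> y \<in> K" using k subgroup.m_inv_closed[OF K] by metis
      moreover have "w = x \<otimes> ((inv x \<otimes> y) \<otimes> u)"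
        using u x y Kc[OF u(1)] by (simp add: G.m_assoc[symmetric])
      ultimately show "w \<in> x <# K" using u subgroup.m_closed[OF K] unfolding l_coset_def by blast
    qed
  qed
qed

lemma Gc1 [simp]: "x \<in> carrier G \<Longrightarrow> z \<in> carrier G \<Longrightarrow> x \<otimes> (inv x \<otimes> z) = z"
  by (metis G.inv_closed G.m_assoc G.r_inv G.l_one)
lemma Gc2 [simp]: "x \<in> carrier G \<Longrightarrow> z \<in> carrier G \<Longrightarrow> inv x \<otimes> (x \<otimes> z) = z"
  by (metis G.inv_closed G.m_assoc G.l_inv G.l_one)
lemma Fc1 [simp]: "x \<in> carrier F \<Longrightarrow> z \<in> carrier F \<Longrightarrow> x \<otimes>\<^bsub>F\<^esub> (inv\<^bsub>F\<^esub> x \<otimes>\<^bsub>F\<^esub> z) = z"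
  by (metis F.inv_closed F.m_assoc F.r_inv F.l_one)
lemma Fc2 [simp]: "x \<in> carrier F \<Longrightarrow> z \<in> carrier F \<Longrightarrow> inv\<^bsub>F\<^esub> x \<otimes>\<^bsub>F\<^esub> (x \<otimes>\<^bsub>F\<^esub> z) = z"
  by (metis F.inv_closed F.m_assoc F.l_inv F.l_one)

lemma Hc: "H \<subseteq> carrier G" using subgroup.subset[OF subH] .

lemma conj_set_iff:
  assumes "y \<in> carrier G"
  shows "x \<in> conj_set G H y \<longleftrightarrow> x \<in> carrier G \<and> y \<otimes> x \<otimes> inv y \<in> H"
proof
  assume "x \<in> conj_set G H y"
  then obtain u where u: "u \<in> H" "x = inv y \<otimes> u \<otimes> y" unfolding conj_set_def by auto
  then have uc: "u \<in> carrier G" using Hc by auto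
  have "y \<otimes> x \<otimes> inv y = u" using u uc assms by (simp add: G.m_assoc)
  then show "x \<in> carrier G \<and> y \<otimes> x \<otimes> inv y \<in> H" using u uc assms by auto
next
  assume h: "x \<in> carrier G \<and> y \<otimes> x \<otimes> inv y \<in> H"
  have "x = inv y \<otimes> (y \<otimes> x \<otimes> inv y) \<otimes> y" using h assms by (simp add: G.m_assoc)
  then show "x \<in> conj_set G H y" using h unfolding conj_set_def by blast
qed

lemma core_iff:
  assumes "\<phi> \<in> hom F G"
  shows "x \<in> phi_core F deg G H \<phi> \<longleftrightarrow> x \<in> carrier G \<and> (\<forall>f\<in>carrier F. \<phi> f \<otimes> x \<otimes> inv (\<phi> f) \<in> H)
          \<and> (\<forall>f\<in>carrier F. deg f = 0 \<longrightarrow> x \<otimes> \<phi> f = \<phi> f \<otimes> x)"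
proof -
  have "x \<in> phi_core F deg G H \<phi> \<longleftrightarrow> (\<forall>f\<in>carrier F. x \<in> conj_set G H (\<phi> f)) \<and> x \<in> carrier G
      \<and> (\<forall>f\<in>carrier F. deg f = 0 \<longrightarrow> x \<otimes> \<phi> f = \<phi> f \<otimes> x)" unfolding phi_core_def by blast
  moreover have "(\<forall>f\<in>carrier F. x \<in> conj_set G H (\<phi> f)) \<longleftrightarrow> (\<forall>f\<in>carrier F. x \<in> carrier G \<and> \<phi> f \<otimes> x \<otimes> inv (\<phi> f) \<in> H)"
    using conj_set_iff hom_in_carrier[OF assms] by blast
  ultimately show ?thesis by blast
qed

lemma core_sub: "\<phi> \<in> hom F G \<Longrightarrow> phi_core F deg G H \<phi> \<subseteq> H"
proof
  fix x assume "\<phi> \<in> hom F G" "x \<in> phi_core F deg G H \<phi>"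
  then have "\<phi> \<one>\<^bsub>F\<^esub> \<otimes> x \<otimes> inv (\<phi> \<one>\<^bsub>F\<^esub>) \<in> H" "x \<in> carrier G" using core_iff by blast+
  moreover have "\<phi> \<one>\<^bsub>F\<^esub> = \<one>" using hom_one[of \<phi> F G] F.group_axioms G.is_group \<open>\<phi> \<in> hom F G\<close> by blast
  ultimately show "x \<in> H" by simp
qed

lemma core_D1: assumes "\<phi> \<in> hom F G" "x \<in> phi_core F deg G H \<phi>" shows "x \<in> carrier G"
  using core_iff[OF assms(1), of x] assms(2) by simp
lemma core_D2: assumes "\<phi> \<in> hom F G" "x \<in> phi_core F deg G H \<phi>" "f \<in> carrier F"
  shows "\<phi> f \<otimes> x \<otimes> inv (\<phi> f) \<in> H"
  using core_iff[OF assms(1), of x] assms(2,3) by simp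
lemma core_D3: assumes "\<phi> \<in> hom F G" "x \<in> phi_core F deg G H \<phi>" "f \<in> carrier F" "deg f = 0"
  shows "x \<otimes> \<phi> f = \<phi> f \<otimes> x"
  using core_iff[OF assms(1), of x] assms(2,3,4) by simp
lemma core_I: assumes "\<phi> \<in> hom F G" "x \<in> carrier G" "\<And>f. f \<in> carrier F \<Longrightarrow> \<phi> f \<otimes> x \<otimes> inv (\<phi> f) \<in> H"
   "\<And>f. f \<in> carrier F \<Longrightarrow> deg f = 0 \<Longrightarrow> x \<otimes> \<phi> f = \<phi> f \<otimes> x" shows "x \<in> phi_core F deg G H \<phi>"
  using core_iff[OF assms(1), of x] assms(2,3,4) by simp

lemma core_subgroup:
  assumes \<phi>: "\<phi> \<in> hom F G"
  shows "subgroup (phi_core F deg G H \<phi>) G"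
proof (rule G.subgroupI)
  have pc: "\<And>f. f \<in> carrier F \<Longrightarrow> \<phi> f \<in> carrier G" using hom_in_carrier[OF \<phi>] .
  show "phi_core F deg G H \<phi> \<subseteq> carrier G" using core_D1[OF \<phi>] by blast
  have "\<one> \<in> phi_core F deg G H \<phi>"
  proof (rule core_I[OF \<phi>])
    fix f assume f: "f \<in> carrier F"
    show "\<phi> f \<otimes> \<one> \<otimes> inv (\<phi> f) \<in> H" using pc[OF f] subgroup.one_closed[OF subH] by simp
    show "\<one> \<otimes> \<phi> f = \<phi> f \<otimes> \<one>" using pc[OF f] by simp
  qed simp
  then show "phi_core F deg G H \<phi> \<noteq> {}" by blast
  fix a b assume a: "a \<in> phi_core F deg G H \<phi>"
  have ac: "a \<in> carrier G" using core_D1[OF \<phi> a] .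
  show "inv a \<in> phi_core F deg G H \<phi>"
  proof (rule core_I[OF \<phi>])
    show "inv a \<in> carrier G" using ac by simp
    fix f assume f: "f \<in> carrier F"
    have "\<phi> f \<otimes> inv a \<otimes> inv (\<phi> f) = inv (\<phi> f \<otimes> a \<otimes> inv (\<phi> f))"
      using ac pc[OF f] by (simp add: G.inv_mult_group G.m_assoc)
    then show "\<phi> f \<otimes> inv a \<otimes> inv (\<phi> f) \<in> H"
      using core_D2[OF \<phi> a f] subgroup.m_inv_closed[OF subH] by simp
    assume f0: "deg f = 0"
    have "a \<otimes> \<phi> f = \<phi> f \<otimes> a" using core_D3[OF \<phi> a f f0] .
    then show "inv a \<otimes> \<phi> f = \<phi> f \<otimes> inv a" using ac pc[OF f]
      by (metis G.inv_closed G.inv_solve_left G.m_assoc G.m_closed G.r_inv G.r_one)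
  qed
  assume b: "b \<in> phi_core F deg G H \<phi>"
  have bc: "b \<in> carrier G" using core_D1[OF \<phi> b] .
  show "a \<otimes> b \<in> phi_core F deg G H \<phi>"
  proof (rule core_I[OF \<phi>])
    show "a \<otimes> b \<in> carrier G" using ac bc by simp
    fix f assume f: "f \<in> carrier F"
    have "\<phi> f \<otimes> (a \<otimes> b) \<otimes> inv (\<phi> f) = (\<phi> f \<otimes> a \<otimes> inv (\<phi> f)) \<otimes> (\<phi> f \<otimes> b \<otimes> inv (\<phi> f))"
      using ac bc pc[OF f] by (simp add: G.m_assoc)
    then show "\<phi> f \<otimes> (a \<otimes> b) \<otimes> inv (\<phi> f) \<in> H"
      using core_D2[OF \<phi> a f] core_D2[OF \<phi> b f] subgroup.m_closed[OF subH] by simp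
    assume f0: "deg f = 0"
    have "a \<otimes> \<phi> f = \<phi> f \<otimes> a" "b \<otimes> \<phi> f = \<phi> f \<otimes> b" using core_D3[OF \<phi> a f f0] core_D3[OF \<phi> b f f0] .
    then show "a \<otimes> b \<otimes> \<phi> f = \<phi> f \<otimes> (a \<otimes> b)" using ac bc pc[OF f] by (metis G.m_assoc)
  qed
qed

lemma G_pow_pred: "z \<in> carrier G \<Longrightarrow> z [^] (i - 1::int) = z [^] i \<otimes> inv z"
  by (metis diff_conv_add_uminus G.int_pow_mult G.int_pow_neg G.int_pow_1)
lemma G_pow_succ: "z \<in> carrier G \<Longrightarrow> z [^] (i + 1::int) = z [^] i \<otimes> z"
  by (metis G.int_pow_mult G.int_pow_1)
lemma F_pow_pred: "z \<in> carrier F \<Longrightarrow> z [^]\<^bsub>F\<^esub> (i - 1::int) = z [^]\<^bsub>F\<^esub> i \<otimes>\<^bsub>F\<^esub> inv\<^bsub>F\<^esub> z"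
  by (metis diff_conv_add_uminus F.int_pow_mult F.int_pow_neg F.int_pow_1)
lemma F_pow_succ: "z \<in> carrier F \<Longrightarrow> z [^]\<^bsub>F\<^esub> (i + 1::int) = z [^]\<^bsub>F\<^esub> i \<otimes>\<^bsub>F\<^esub> z"
  by (metis F.int_pow_mult F.int_pow_1)

lemma conj_pow:
  assumes \<phi>: "\<phi> \<in> hom F G" and z: "z \<in> carrier G"
    and hz: "\<forall>c\<in>carrier F. deg c = 0 \<longrightarrow> z \<otimes> \<phi> c \<otimes> inv z = \<phi> (f1 \<otimes>\<^bsub>F\<^esub> c \<otimes>\<^bsub>F\<^esub> inv\<^bsub>F\<^esub> f1)"
  shows "\<forall>c\<in>carrier F. deg c = 0 \<longrightarrow>
     z [^] (n::int) \<otimes> \<phi> c \<otimes> inv (z [^] n) = \<phi> (f1 [^]\<^bsub>F\<^esub> n \<otimes>\<^bsub>F\<^esub> c \<otimes>\<^bsub>F\<^esub> inv\<^bsub>F\<^esub> (f1 [^]\<^bsub>F\<^esub> n))"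
proof -
  have pc: "\<And>f. f \<in> carrier F \<Longrightarrow> \<phi> f \<in> carrier G" using hom_in_carrier[OF \<phi>] .
  note f1c = f1(1)
  have hz': "inv z \<otimes> \<phi> c \<otimes> z = \<phi> (inv\<^bsub>F\<^esub> f1 \<otimes>\<^bsub>F\<^esub> c \<otimes>\<^bsub>F\<^esub> f1)" if c: "c \<in> carrier F" "deg c = 0" for c
  proof -
    define c' where "c' = inv\<^bsub>F\<^esub> f1 \<otimes>\<^bsub>F\<^esub> c \<otimes>\<^bsub>F\<^esub> f1"
    have c'c: "c' \<in> carrier F" using c f1c by (simp add: c'_def)
    have "deg c' = 0" using c f1c by (simp add: c'_def deg_mult deg_inv)
    then have "z \<otimes> \<phi> c' \<otimes> inv z = \<phi> (f1 \<otimes>\<^bsub>F\<^esub> c' \<otimes>\<^bsub>F\<^esub> inv\<^bsub>F\<^esub> f1)" using hz c'c by blast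
    also have "f1 \<otimes>\<^bsub>F\<^esub> c' \<otimes>\<^bsub>F\<^esub> inv\<^bsub>F\<^esub> f1 = c" using c f1c by (simp add: c'_def F.m_assoc)
    finally have "z \<otimes> \<phi> c' \<otimes> inv z = \<phi> c" .
    then have "inv z \<otimes> \<phi> c \<otimes> z = inv z \<otimes> (z \<otimes> \<phi> c' \<otimes> inv z) \<otimes> z" by simp
    also have "\<dots> = \<phi> c'" using z pc[OF c'c] by (simp add: G.m_assoc)
    finally show ?thesis by (simp add: c'_def)
  qed
  show ?thesis
  proof (induction n rule: int_induct[where k=0])
    case base
    then show ?case using pc f1c by simp
  next
    case (step1 i)
    show ?case
    proof (intro ballI impI)
      fix c assume c: "c \<in> carrier F" "deg c = 0"
      define c1 where "c1 = f1 \<otimes>\<^bsub>F\<^esub> c \<otimes>\<^bsub>F\<^esub> inv\<^bsub>F\<^esub> f1"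
      have c1c: "c1 \<in> carrier F" using c f1c by (simp add: c1_def)
      have c1d: "deg c1 = 0" using c f1c by (simp add: c1_def deg_mult deg_inv)
      have "z [^] (i+1) \<otimes> \<phi> c \<otimes> inv (z [^] (i+1)) = z [^] i \<otimes> (z \<otimes> \<phi> c \<otimes> inv z) \<otimes> inv (z [^] i)"
        using z pc[OF c(1)] by (simp add: G_pow_succ G.inv_mult_group G.m_assoc)
      also have "\<dots> = z [^] i \<otimes> \<phi> c1 \<otimes> inv (z [^] i)" using hz c by (simp add: c1_def)
      also have "\<dots> = \<phi> (f1 [^]\<^bsub>F\<^esub> i \<otimes>\<^bsub>F\<^esub> c1 \<otimes>\<^bsub>F\<^esub> inv\<^bsub>F\<^esub> (f1 [^]\<^bsub>F\<^esub> i))" using step1.IH c1c c1d by blast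
      also have "f1 [^]\<^bsub>F\<^esub> i \<otimes>\<^bsub>F\<^esub> c1 \<otimes>\<^bsub>F\<^esub> inv\<^bsub>F\<^esub> (f1 [^]\<^bsub>F\<^esub> i)
          = f1 [^]\<^bsub>F\<^esub> (i+1) \<otimes>\<^bsub>F\<^esub> c \<otimes>\<^bsub>F\<^esub> inv\<^bsub>F\<^esub> (f1 [^]\<^bsub>F\<^esub> (i+1))"
        using f1c c by (simp add: c1_def F_pow_succ F.inv_mult_group F.m_assoc)
      finally show "z [^] (i+1) \<otimes> \<phi> c \<otimes> inv (z [^] (i+1)) = \<phi> (f1 [^]\<^bsub>F\<^esub> (i+1) \<otimes>\<^bsub>F\<^esub> c \<otimes>\<^bsub>F\<^esub> inv\<^bsub>F\<^esub> (f1 [^]\<^bsub>F\<^esub> (i+1)))" .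
    qed
  next
    case (step2 i)
    show ?case
    proof (intro ballI impI)
      fix c assume c: "c \<in> carrier F" "deg c = 0"
      define c1 where "c1 = inv\<^bsub>F\<^esub> f1 \<otimes>\<^bsub>F\<^esub> c \<otimes>\<^bsub>F\<^esub> f1"
      have c1c: "c1 \<in> carrier F" using c f1c by (simp add: c1_def)
      have c1d: "deg c1 = 0" using c f1c by (simp add: c1_def deg_mult deg_inv)
      have "z [^] (i-1) \<otimes> \<phi> c \<otimes> inv (z [^] (i-1)) = z [^] i \<otimes> (inv z \<otimes> \<phi> c \<otimes> z) \<otimes> inv (z [^] i)"
        using z pc[OF c(1)] by (simp add: G_pow_pred G.inv_mult_group G.m_assoc)
      also have "\<dots> = z [^] i \<otimes> \<phi> c1 \<otimes> inv (z [^] i)" using hz' c by (simp add: c1_def)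
      also have "\<dots> = \<phi> (f1 [^]\<^bsub>F\<^esub> i \<otimes>\<^bsub>F\<^esub> c1 \<otimes>\<^bsub>F\<^esub> inv\<^bsub>F\<^esub> (f1 [^]\<^bsub>F\<^esub> i))" using step2.IH c1c c1d by blast
      also have "f1 [^]\<^bsub>F\<^esub> i \<otimes>\<^bsub>F\<^esub> c1 \<otimes>\<^bsub>F\<^esub> inv\<^bsub>F\<^esub> (f1 [^]\<^bsub>F\<^esub> i)
          = f1 [^]\<^bsub>F\<^esub> (i-1) \<otimes>\<^bsub>F\<^esub> c \<otimes>\<^bsub>F\<^esub> inv\<^bsub>F\<^esub> (f1 [^]\<^bsub>F\<^esub> (i-1))"
        using f1c c by (simp add: c1_def F_pow_pred F.inv_mult_group F.m_assoc)
      finally show "z [^] (i-1) \<otimes> \<phi> c \<otimes> inv (z [^] (i-1)) = \<phi> (f1 [^]\<^bsub>F\<^esub> (i-1) \<otimes>\<^bsub>F\<^esub> c \<otimes>\<^bsub>F\<^esub> inv\<^bsub>F\<^esub> (f1 [^]\<^bsub>F\<^esub> (i-1)))" .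
    qed
  qed
qed

lemma f0_mult:
  assumes a: "a \<in> carrier F" and b: "b \<in> carrier F"
  shows "f0 (a \<otimes>\<^bsub>F\<^esub> b) = f0 a \<otimes>\<^bsub>F\<^esub> (f1 [^]\<^bsub>F\<^esub> deg a \<otimes>\<^bsub>F\<^esub> f0 b \<otimes>\<^bsub>F\<^esub> inv\<^bsub>F\<^esub> (f1 [^]\<^bsub>F\<^esub> deg a))"
proof -
  let ?P = "\<lambda>i::int. f1 [^]\<^bsub>F\<^esub> i"
  have Pc: "\<And>i. ?P i \<in> carrier F" using f1(1) by simp
  have e1: "\<And>i. ?P (- i) = inv\<^bsub>F\<^esub> (?P i)" using f1(1) by (simp add: F.int_pow_neg)
  have e2: "?P (deg a + deg b) = ?P (deg a) \<otimes>\<^bsub>F\<^esub> ?P (deg b)" using f1(1) by (simp add: F.int_pow_mult)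
  have "f0 (a \<otimes>\<^bsub>F\<^esub> b) = a \<otimes>\<^bsub>F\<^esub> b \<otimes>\<^bsub>F\<^esub> inv\<^bsub>F\<^esub> (?P (deg a + deg b))"
  proof -
    have "?P (- deg a - deg b) = inv\<^bsub>F\<^esub> (?P (deg a + deg b))" using e1[of "deg a + deg b"] by simp
    then show ?thesis unfolding f0_def using a b by (simp add: deg_mult)
  qed
  also have "\<dots> = a \<otimes>\<^bsub>F\<^esub> (b \<otimes>\<^bsub>F\<^esub> (inv\<^bsub>F\<^esub> (?P (deg b)) \<otimes>\<^bsub>F\<^esub> inv\<^bsub>F\<^esub> (?P (deg a))))"
    unfolding e2 using a b Pc by (simp add: F.inv_mult_group F.m_assoc)
  also have "\<dots> = f0 a \<otimes>\<^bsub>F\<^esub> (?P (deg a) \<otimes>\<^bsub>F\<^esub> f0 b \<otimes>\<^bsub>F\<^esub> inv\<^bsub>F\<^esub> (?P (deg a)))"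
    unfolding f0_def e1 using a b Pc by (simp add: F.m_assoc)
  finally show ?thesis .
qed

definition md :: "('f \<Rightarrow> 'g) \<Rightarrow> 'g \<Rightarrow> 'f \<Rightarrow> 'g" where
  "md \<phi> k = restrict (\<lambda>a. \<phi> (f0 a) \<otimes> (\<phi> f1 \<otimes> k) [^] deg a) (carrier F)"

lemma md_props:
  assumes \<phi>: "\<phi> \<in> hom F G" and k: "k \<in> carrier G"
    and kc: "\<And>c. c \<in> carrier F \<Longrightarrow> deg c = 0 \<Longrightarrow> k \<otimes> \<phi> c = \<phi> c \<otimes> k"
  shows "md \<phi> k \<in> hom F G \<inter> extensional (carrier F)" "md \<phi> k f1 = \<phi> f1 \<otimes> k"
    "\<forall>c\<in>carrier F. deg c = 0 \<longrightarrow> md \<phi> k c = \<phi> c"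
proof -
  have pc: "\<And>f. f \<in> carrier F \<Longrightarrow> \<phi> f \<in> carrier G" using hom_in_carrier[OF \<phi>] .
  have gh: "group_hom F G \<phi>" using ghom[OF \<phi>] .
  define z where "z = \<phi> f1 \<otimes> k"
  have zc: "z \<in> carrier G" using pc f1(1) k by (simp add: z_def)
  have phi1: "\<phi> \<one>\<^bsub>F\<^esub> = \<one>" using group_hom.hom_one[OF gh] .
  show "md \<phi> k f1 = \<phi> f1 \<otimes> k"
  proof -
    have "f0 f1 = \<one>\<^bsub>F\<^esub>" using f1 by (simp add: f0_def F.int_pow_neg)
    then show ?thesis using f1 phi1 zc by (simp add: md_def z_def)
  qed
  show "\<forall>c\<in>carrier F. deg c = 0 \<longrightarrow> md \<phi> k c = \<phi> c"
  proof (intro ballI impI)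
    fix c assume c: "c \<in> carrier F" "deg c = 0"
    then have "f0 c = c" by (simp add: f0_def)
    then show "md \<phi> k c = \<phi> c" using c pc[OF c(1)] by (simp add: md_def)
  qed
  have hz: "\<forall>c\<in>carrier F. deg c = 0 \<longrightarrow> z \<otimes> \<phi> c \<otimes> inv z = \<phi> (f1 \<otimes>\<^bsub>F\<^esub> c \<otimes>\<^bsub>F\<^esub> inv\<^bsub>F\<^esub> f1)"
  proof (intro ballI impI)
    fix c assume c: "c \<in> carrier F" "deg c = 0"
    have "z \<otimes> \<phi> c \<otimes> inv z = \<phi> f1 \<otimes> (k \<otimes> \<phi> c) \<otimes> inv k \<otimes> inv (\<phi> f1)"
      using pc[OF c(1)] pc[OF f1(1)] k by (simp add: z_def G.inv_mult_group G.m_assoc)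
    also have "\<dots> = \<phi> f1 \<otimes> \<phi> c \<otimes> inv (\<phi> f1)"
      using kc[OF c] pc[OF c(1)] pc[OF f1(1)] k by (simp add: G.m_assoc)
    also have "\<dots> = \<phi> (f1 \<otimes>\<^bsub>F\<^esub> c \<otimes>\<^bsub>F\<^esub> inv\<^bsub>F\<^esub> f1)"
      using c f1(1) group_hom.hom_inv[OF gh f1(1)] hom_mult[OF \<phi>] by simp
    finally show "z \<otimes> \<phi> c \<otimes> inv z = \<phi> (f1 \<otimes>\<^bsub>F\<^esub> c \<otimes>\<^bsub>F\<^esub> inv\<^bsub>F\<^esub> f1)" .
  qed
  note cp = conj_pow[OF \<phi> zc hz]
  have mdc: "\<And>a. a \<in> carrier F \<Longrightarrow> md \<phi> k a = \<phi> (f0 a) \<otimes> z [^] deg a" by (simp add: md_def z_def)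
  have "md \<phi> k \<in> hom F G"
  proof (rule homI)
    fix a assume a: "a \<in> carrier F"
    show "md \<phi> k a \<in> carrier G" using mdc[OF a] pc[OF f0_carrier[OF a]] zc by simp
  next
    fix a b assume a: "a \<in> carrier F" and b: "b \<in> carrier F"
    let ?n = "deg a" and ?m = "deg b"
    let ?w = "f1 [^]\<^bsub>F\<^esub> ?n \<otimes>\<^bsub>F\<^esub> f0 b \<otimes>\<^bsub>F\<^esub> inv\<^bsub>F\<^esub> (f1 [^]\<^bsub>F\<^esub> ?n)"
    have wc: "?w \<in> carrier F" using f1(1) f0_carrier[OF b] by simp
    have ab: "a \<otimes>\<^bsub>F\<^esub> b \<in> carrier F" using a b by simp
    have "md \<phi> k (a \<otimes>\<^bsub>F\<^esub> b) = \<phi> (f0 a \<otimes>\<^bsub>F\<^esub> ?w) \<otimes> z [^] (?n + ?m)"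
      using mdc[OF ab] f0_mult[OF a b] deg_mult[OF a b] by simp
    also have "\<dots> = \<phi> (f0 a) \<otimes> \<phi> ?w \<otimes> (z [^] ?n \<otimes> z [^] ?m)"
      using hom_mult[OF \<phi> f0_carrier[OF a] wc] G.int_pow_mult[OF zc] by simp
    also have "\<phi> ?w = z [^] ?n \<otimes> \<phi> (f0 b) \<otimes> inv (z [^] ?n)"
      using cp f0_carrier[OF b] f0_deg[OF b] by simp
    also have "\<phi> (f0 a) \<otimes> (z [^] ?n \<otimes> \<phi> (f0 b) \<otimes> inv (z [^] ?n)) \<otimes> (z [^] ?n \<otimes> z [^] ?m)
        = (\<phi> (f0 a) \<otimes> z [^] ?n) \<otimes> (\<phi> (f0 b) \<otimes> z [^] ?m)"
      using pc[OF f0_carrier[OF a]] pc[OF f0_carrier[OF b]] zc by (simp add: G.m_assoc)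
    also have "\<dots> = md \<phi> k a \<otimes> md \<phi> k b" using mdc[OF a] mdc[OF b] by simp
    finally show "md \<phi> k (a \<otimes>\<^bsub>F\<^esub> b) = md \<phi> k a \<otimes> md \<phi> k b" .
  qed
  moreover have "md \<phi> k \<in> extensional (carrier F)" by (simp add: md_def)
  ultimately show "md \<phi> k \<in> hom F G \<inter> extensional (carrier F)" by simp
qed

lemma Phi_D: "\<phi> \<in> \<Phi> \<Longrightarrow> \<phi> \<in> hom F G" using Phi_hom by blast
lemma Phi_E: "\<phi> \<in> \<Phi> \<Longrightarrow> \<phi> \<in> extensional (carrier F)" using Phi_hom by blast

lemma restrict_eq_iff: "restrict f A = restrict g A \<longleftrightarrow> (\<forall>x\<in>A. f x = g x)"
  by (auto simp: restrict_def fun_eq_iff)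

lemma tail_eq_iff:
  "tail F deg G H \<chi> = tail F deg G H \<psi> \<longleftrightarrow>
     (\<forall>f\<in>carrier F. deg f = 0 \<longrightarrow> \<chi> f = \<psi> f) \<and> (\<forall>f\<in>carrier F. \<chi> f <# H = \<psi> f <# H)"
  unfolding tail_def by (simp add: restrict_eq_iff) blast

lemma tail_mul:
  assumes \<chi>: "\<chi> \<in> hom F G" and \<phi>: "\<phi> \<in> hom F G"
    and e: "\<forall>f\<in>carrier F. \<chi> f <# H = \<phi> f <# H" and f: "f \<in> carrier F"
  shows "\<chi> f \<otimes> inv (\<phi> f) \<in> H"
proof -
  have fi: "inv\<^bsub>F\<^esub> f \<in> carrier F" using f by simp
  have c1: "\<chi> f \<in> carrier G" "\<phi> f \<in> carrier G" using hom_in_carrier[OF \<chi> f] hom_in_carrier[OF \<phi> f] by auto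
  have "\<chi> (inv\<^bsub>F\<^esub> f) <# H = \<phi> (inv\<^bsub>F\<^esub> f) <# H" using e fi by blast
  moreover have "\<chi> (inv\<^bsub>F\<^esub> f) = inv (\<chi> f)" "\<phi> (inv\<^bsub>F\<^esub> f) = inv (\<phi> f)"
    using group_hom.hom_inv[OF ghom[OF \<chi>] f] group_hom.hom_inv[OF ghom[OF \<phi>] f] by auto
  ultimately have "inv (inv (\<phi> f)) \<otimes> inv (\<chi> f) \<in> H"
    using lcos_eq_iff[OF subH, of "inv (\<chi> f)" "inv (\<phi> f)"] c1 by simp
  then have "inv (\<phi> f \<otimes> inv (\<chi> f)) \<in> H" using c1 subgroup.m_inv_closed[OF subH] by simp
  moreover have "inv (\<phi> f \<otimes> inv (\<chi> f)) = \<chi> f \<otimes> inv (\<phi> f)" using c1 by (simp add: G.inv_mult_group)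
  ultimately show ?thesis by simp
qed

lemma T1:
  assumes \<chi>: "\<chi> \<in> hom F G" and \<phi>: "\<phi> \<in> hom F G"
    and t: "tail F deg G H \<chi> = tail F deg G H \<phi>"
  shows "inv (\<phi> f1) \<otimes> \<chi> f1 \<in> phi_core F deg G H \<phi>"
proof -
  have e0: "\<forall>f\<in>carrier F. deg f = 0 \<longrightarrow> \<chi> f = \<phi> f" and e1: "\<forall>f\<in>carrier F. \<chi> f <# H = \<phi> f <# H"
    using t tail_eq_iff by auto
  have pc: "\<And>f. f \<in> carrier F \<Longrightarrow> \<phi> f \<in> carrier G" using hom_in_carrier[OF \<phi>] .
  have xc: "\<And>f. f \<in> carrier F \<Longrightarrow> \<chi> f \<in> carrier G" using hom_in_carrier[OF \<chi>] .
  define y where "y = \<phi> f1"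
  define k where "k = inv y \<otimes> \<chi> f1"
  have yc: "y \<in> carrier G" using pc f1(1) by (simp add: y_def)
  have kc: "k \<in> carrier G" using yc xc f1(1) by (simp add: k_def)
  have x1: "\<chi> f1 = y \<otimes> k" using yc xc[OF f1(1)] by (simp add: k_def)
  show ?thesis
    unfolding k_def[symmetric] y_def[symmetric]
  proof (rule core_I[OF \<phi> kc])
    fix f assume f: "f \<in> carrier F"
    define g where "g = f \<otimes>\<^bsub>F\<^esub> inv\<^bsub>F\<^esub> f1"
    have gc: "g \<in> carrier F" using f f1(1) by (simp add: g_def)
    have fg: "f = g \<otimes>\<^bsub>F\<^esub> f1" using f f1(1) by (simp add: g_def F.m_assoc)
    have \<chi>f: "\<chi> f = \<chi> g \<otimes> (y \<otimes> k)" using fg hom_mult[OF \<chi> gc f1(1)] x1 by simp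
    have \<phi>f: "\<phi> f = \<phi> g \<otimes> y" using fg hom_mult[OF \<phi> gc f1(1)] by (simp add: y_def)
    have "\<phi> f \<otimes> k \<otimes> inv (\<phi> f) = inv (\<chi> g \<otimes> inv (\<phi> g)) \<otimes> (\<chi> f \<otimes> inv (\<phi> f))"
      unfolding \<phi>f \<chi>f using pc[OF gc] xc[OF gc] yc kc by (simp add: G.inv_mult_group G.m_assoc)
    moreover have "\<chi> g \<otimes> inv (\<phi> g) \<in> H" using tail_mul[OF \<chi> \<phi> e1 gc] .
    moreover have "\<chi> f \<otimes> inv (\<phi> f) \<in> H" using tail_mul[OF \<chi> \<phi> e1 f] .
    ultimately show "\<phi> f \<otimes> k \<otimes> inv (\<phi> f) \<in> H"
      using subgroup.m_closed[OF subH] subgroup.m_inv_closed[OF subH] by simp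
  next
    fix c assume c: "c \<in> carrier F" "deg c = 0"
    define c' where "c' = f1 \<otimes>\<^bsub>F\<^esub> c \<otimes>\<^bsub>F\<^esub> inv\<^bsub>F\<^esub> f1"
    have c'c: "c' \<in> carrier F" using c f1(1) by (simp add: c'_def)
    have c'd: "deg c' = 0" using c f1 by (simp add: c'_def deg_mult deg_inv)
    let ?p = "\<phi> c"
    have p: "?p \<in> carrier G" using pc[OF c(1)] .
    have "\<chi> c' = \<chi> f1 \<otimes> \<chi> c \<otimes> inv (\<chi> f1)"
      using c f1(1) hom_mult[OF \<chi>] group_hom.hom_inv[OF ghom[OF \<chi>] f1(1)] by (simp add: c'_def)
    then have A: "\<chi> c' = y \<otimes> k \<otimes> ?p \<otimes> inv (y \<otimes> k)" using x1 e0 c by simp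
    have "\<phi> c' = \<phi> f1 \<otimes> \<phi> c \<otimes> inv (\<phi> f1)"
      using c f1(1) hom_mult[OF \<phi>] group_hom.hom_inv[OF ghom[OF \<phi>] f1(1)] by (simp add: c'_def)
    then have B: "\<phi> c' = y \<otimes> ?p \<otimes> inv y" by (simp add: y_def)
    have E: "y \<otimes> k \<otimes> ?p \<otimes> inv (y \<otimes> k) = y \<otimes> ?p \<otimes> inv y" using A B e0 c'c c'd by simp
    have "k \<otimes> ?p = inv y \<otimes> (y \<otimes> k \<otimes> ?p \<otimes> inv (y \<otimes> k)) \<otimes> (y \<otimes> k)"
      using yc kc p by (simp add: G.inv_mult_group G.m_assoc)
    also have "\<dots> = inv y \<otimes> (y \<otimes> ?p \<otimes> inv y) \<otimes> (y \<otimes> k)" using E by simp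
    also have "\<dots> = ?p \<otimes> k" using yc kc p by (simp add: G.m_assoc)
    finally show "k \<otimes> \<phi> c = \<phi> c \<otimes> k" .
  qed
qed

lemma T1_eq:
  assumes \<chi>: "\<chi> \<in> \<Phi>" and \<phi>: "\<phi> \<in> \<Phi>"
    and t: "tail F deg G H \<chi> = tail F deg G H \<phi>"
  shows "\<chi> = md \<phi> (inv (\<phi> f1) \<otimes> \<chi> f1)"
proof -
  let ?k = "inv (\<phi> f1) \<otimes> \<chi> f1"
  have kcore: "?k \<in> phi_core F deg G H \<phi>" using T1[OF Phi_D[OF \<chi>] Phi_D[OF \<phi>] t] .
  note \<phi>h = Phi_D[OF \<phi>]
  have kc: "?k \<in> carrier G" using core_D1[OF \<phi>h kcore] .
  note mp = md_props[OF \<phi>h kc core_D3[OF \<phi>h kcore]]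
  have e0: "\<forall>f\<in>carrier F. deg f = 0 \<longrightarrow> \<chi> f = \<phi> f" using t tail_eq_iff by auto
  show ?thesis
  proof (rule hom_eq)
    show "\<chi> \<in> hom F G \<inter> extensional (carrier F)" using Phi_hom \<chi> by blast
    show "md \<phi> ?k \<in> hom F G \<inter> extensional (carrier F)" using mp(1) .
    show "\<forall>c\<in>carrier F. deg c = 0 \<longrightarrow> \<chi> c = md \<phi> ?k c" using mp(3) e0 by simp
    show "\<chi> f1 = md \<phi> ?k f1" using mp(2) hom_in_carrier[OF \<phi>h f1(1)] hom_in_carrier[OF Phi_D[OF \<chi>] f1(1)]
      by (simp add: G.m_assoc[symmetric])
  qed
qed

lemma G_pow_succ_l: "z \<in> carrier G \<Longrightarrow> z [^] (i + 1::int) = z \<otimes> z [^] i"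
  by (metis add.commute G.int_pow_mult G.int_pow_1)
lemma G_pow_pred_l: "z \<in> carrier G \<Longrightarrow> z [^] (i - 1::int) = inv z \<otimes> z [^] i"
proof -
  assume z: "z \<in> carrier G"
  have "i - 1 = -1 + i" by simp
  then show ?thesis using z G.int_pow_mult[OF z, of "-1" i] G.int_pow_neg[OF z, of 1] by simp
qed

lemma T2:
  assumes \<phi>: "\<phi> \<in> \<Phi>" and kcore: "k \<in> phi_core F deg G H \<phi>"
  shows "md \<phi> k \<in> \<Phi>" "tail F deg G H (md \<phi> k) = tail F deg G H \<phi>" "md \<phi> k f1 = \<phi> f1 \<otimes> k"
proof -
  note \<phi>h = Phi_D[OF \<phi>]
  have kc: "k \<in> carrier G" using core_D1[OF \<phi>h kcore] .
  note mp = md_props[OF \<phi>h kc core_D3[OF \<phi>h kcore]]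
  show "md \<phi> k f1 = \<phi> f1 \<otimes> k" using mp(2) .
  show "md \<phi> k \<in> \<Phi>" using II[OF \<phi> kcore mp(1) mp(3) f1 mp(2)] .
  have pc: "\<And>f. f \<in> carrier F \<Longrightarrow> \<phi> f \<in> carrier G" using hom_in_carrier[OF \<phi>h] .
  define y where "y = \<phi> f1"
  define z where "z = y \<otimes> k"
  have yc: "y \<in> carrier G" using pc f1(1) by (simp add: y_def)
  have zc: "z \<in> carrier G" using yc kc by (simp add: z_def)
  have kconj: "inv (y [^] j) \<otimes> k \<otimes> y [^] j \<in> H" for j :: int
  proof -
    have fj: "f1 [^]\<^bsub>F\<^esub> (-j) \<in> carrier F" using f1(1) by simp
    have "\<phi> (f1 [^]\<^bsub>F\<^esub> (-j)) = y [^] (-j)"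
      using group_hom.hom_int_pow[OF ghom[OF \<phi>h] f1(1)] by (simp add: y_def)
    also have "\<dots> = inv (y [^] j)" using G.int_pow_neg[OF yc] .
    finally have "\<phi> (f1 [^]\<^bsub>F\<^esub> (-j)) = inv (y [^] j)" .
    then show ?thesis using core_D2[OF \<phi>h kcore fj] yc by simp
  qed
  have bn: "inv (y [^] n) \<otimes> z [^] n \<in> H" for n :: int
  proof (induction n rule: int_induct[where k=0])
    case base
    then show ?case using subgroup.one_closed[OF subH] by simp
  next
    case (step1 i)
    have "inv (y [^] (i+1)) \<otimes> z [^] (i+1) = (inv (y [^] i) \<otimes> k \<otimes> y [^] i) \<otimes> (inv (y [^] i) \<otimes> z [^] i)"
      using yc zc kc by (simp add: G_pow_succ_l G.inv_mult_group G.m_assoc z_def)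
    then show ?case using kconj[of i] step1.IH subgroup.m_closed[OF subH] by simp
  next
    case (step2 i)
    have e: "inv (y [^] (i-1)) \<otimes> k \<otimes> y [^] (i-1) = inv (y [^] i) \<otimes> y \<otimes> k \<otimes> inv y \<otimes> y [^] i"
      using yc kc by (simp add: G_pow_pred_l G.inv_mult_group G.m_assoc)
    have "inv (y [^] (i-1)) \<otimes> z [^] (i-1) = inv (inv (y [^] (i-1)) \<otimes> k \<otimes> y [^] (i-1)) \<otimes> (inv (y [^] i) \<otimes> z [^] i)"
      unfolding e using yc zc kc by (simp add: G_pow_pred_l G.inv_mult_group G.m_assoc z_def)
    then show ?case using kconj[of "i-1"] step2.IH subgroup.m_closed[OF subH] subgroup.m_inv_closed[OF subH] by simp
  qed
  show "tail F deg G H (md \<phi> k) = tail F deg G H \<phi>"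
    unfolding tail_eq_iff
  proof (intro conjI ballI impI)
    fix f assume "f \<in> carrier F" "deg f = 0"
    then show "md \<phi> k f = \<phi> f" using mp(3) by blast
  next
    fix a assume a: "a \<in> carrier F"
    have md: "md \<phi> k a = \<phi> (f0 a) \<otimes> z [^] deg a" using a by (simp add: md_def z_def y_def)
    have pa: "\<phi> a = \<phi> (f0 a) \<otimes> y [^] deg a" using hom_decomp[OF \<phi>h a] by (simp add: y_def)
    have "inv (\<phi> a) \<otimes> md \<phi> k a = inv (y [^] deg a) \<otimes> z [^] deg a"
      unfolding md pa using pc[OF f0_carrier[OF a]] yc zc by (simp add: G.inv_mult_group G.m_assoc)
    then have "inv (\<phi> a) \<otimes> md \<phi> k a \<in> H" using bn by simp
    then show "md \<phi> k a <# H = \<phi> a <# H"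
      using lcos_eq_iff[OF subH] hom_in_carrier[OF mp(1)[THEN IntD1] a] pc[OF a] by blast
  qed
qed

lemma fiber_core:
  assumes \<phi>: "\<phi> \<in> \<Phi>"
  shows "{\<chi> \<in> \<Phi>. tail F deg G H \<chi> = tail F deg G H \<phi>} \<approx> phi_core F deg G H \<phi>"
proof -
  have "bij_betw (\<lambda>\<chi>. inv (\<phi> f1) \<otimes> \<chi> f1) {\<chi> \<in> \<Phi>. tail F deg G H \<chi> = tail F deg G H \<phi>} (phi_core F deg G H \<phi>)"
  proof (rule bij_betw_byWitness[where f' = "md \<phi>"])
    show "\<forall>\<chi>\<in>{\<chi> \<in> \<Phi>. tail F deg G H \<chi> = tail F deg G H \<phi>}. md \<phi> (inv (\<phi> f1) \<otimes> \<chi> f1) = \<chi>"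
      using T1_eq \<phi> by auto
    show "\<forall>k\<in>phi_core F deg G H \<phi>. inv (\<phi> f1) \<otimes> md \<phi> k f1 = k"
    proof
      fix k assume k: "k \<in> phi_core F deg G H \<phi>"
      have "k \<in> carrier G" using core_D1[OF Phi_D[OF \<phi>] k] .
      then show "inv (\<phi> f1) \<otimes> md \<phi> k f1 = k" using T2(3)[OF \<phi> k] hom_in_carrier[OF Phi_D[OF \<phi>] f1(1)]
        by (simp add: G.m_assoc[symmetric])
    qed
    show "(\<lambda>\<chi>. inv (\<phi> f1) \<otimes> \<chi> f1) ` {\<chi> \<in> \<Phi>. tail F deg G H \<chi> = tail F deg G H \<phi>} \<subseteq> phi_core F deg G H \<phi>"
      using T1 Phi_D \<phi> by auto
    show "md \<phi> ` phi_core F deg G H \<phi> \<subseteq> {\<chi> \<in> \<Phi>. tail F deg G H \<chi> = tail F deg G H \<phi>}"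
      using T2[OF \<phi>] by auto
  qed
  then show ?thesis unfolding eqpoll_def by blast
qed

definition cj :: "'g \<Rightarrow> ('f \<Rightarrow> 'g) \<Rightarrow> 'f \<Rightarrow> 'g" where
  "cj h \<phi> = restrict (\<lambda>f. h \<otimes> \<phi> f \<otimes> inv h) (carrier F)"

lemma Hcar: "h \<in> H \<Longrightarrow> h \<in> carrier G" using Hc by blast
lemma Hinv: "h \<in> H \<Longrightarrow> inv h \<in> H" using subgroup.m_inv_closed[OF subH] .
lemma Hmul: "a \<in> H \<Longrightarrow> b \<in> H \<Longrightarrow> a \<otimes> b \<in> H" using subgroup.m_closed[OF subH] .

lemma cj_Phi: "h \<in> H \<Longrightarrow> \<phi> \<in> \<Phi> \<Longrightarrow> cj h \<phi> \<in> \<Phi>"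
  using I[of "inv h" \<phi>] Hinv[of h] Hcar[of h] by (simp add: cj_def)

lemma cj_hom:
  assumes \<phi>: "\<phi> \<in> hom F G" and h: "h \<in> carrier G"
  shows "cj h \<phi> \<in> hom F G"
proof (rule homI)
  have pc: "\<And>f. f \<in> carrier F \<Longrightarrow> \<phi> f \<in> carrier G" using hom_in_carrier[OF \<phi>] .
  fix a assume a: "a \<in> carrier F"
  show "cj h \<phi> a \<in> carrier G" using a pc[OF a] h by (simp add: cj_def)
next
  have pc: "\<And>f. f \<in> carrier F \<Longrightarrow> \<phi> f \<in> carrier G" using hom_in_carrier[OF \<phi>] .
  fix a b assume a: "a \<in> carrier F" and b: "b \<in> carrier F"
  show "cj h \<phi> (a \<otimes>\<^bsub>F\<^esub> b) = cj h \<phi> a \<otimes> cj h \<phi> b"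
    using a b pc[OF a] pc[OF b] h hom_mult[OF \<phi> a b] by (simp add: cj_def G.m_assoc)
qed

lemma lcos_absorb: "x \<in> carrier G \<Longrightarrow> u \<in> H \<Longrightarrow> (x \<otimes> u) <# H = x <# H"
  using lcos_eq_iff[OF subH, of "x \<otimes> u" x] Hcar[of u] by (simp add: G.m_assoc[symmetric])

lemma tail_cj_iff:
  assumes \<phi>: "\<phi> \<in> hom F G" and h: "h \<in> H"
  shows "tail F deg G H \<psi> = tail F deg G H (cj h \<phi>) \<longleftrightarrow>
    (\<forall>f\<in>carrier F. deg f = 0 \<longrightarrow> \<psi> f = h \<otimes> \<phi> f \<otimes> inv h) \<and> (\<forall>f\<in>carrier F. \<psi> f <# H = (h \<otimes> \<phi> f) <# H)"
proof -
  have "(h \<otimes> \<phi> f \<otimes> inv h) <# H = (h \<otimes> \<phi> f) <# H" if f: "f \<in> carrier F" for f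
    using lcos_absorb[of "h \<otimes> \<phi> f" "inv h"] Hinv[OF h] Hcar[OF h] hom_in_carrier[OF \<phi> f] by simp
  then show ?thesis unfolding tail_eq_iff by (simp add: cj_def)
qed

lemma sim_iff:
  assumes \<phi>: "\<phi> \<in> \<Phi>"
  shows "similar F deg G H \<phi> \<psi> \<longleftrightarrow> (\<exists>h\<in>H. tail F deg G H \<psi> = tail F deg G H (cj h \<phi>))"
  unfolding similar_def using tail_cj_iff[OF Phi_D[OF \<phi>]] by simp

lemma A1:
  assumes a: "a \<in> carrier G" and b: "b \<in> carrier G" and p: "p \<in> carrier G"
  shows "a \<otimes> p \<otimes> inv a = b \<otimes> p \<otimes> inv b \<longleftrightarrow> (inv b \<otimes> a) \<otimes> p = p \<otimes> (inv b \<otimes> a)"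
proof
  assume e: "a \<otimes> p \<otimes> inv a = b \<otimes> p \<otimes> inv b"
  have "(inv b \<otimes> a) \<otimes> p = inv b \<otimes> (a \<otimes> p \<otimes> inv a) \<otimes> a" using a b p by (simp add: G.m_assoc)
  also have "\<dots> = inv b \<otimes> (b \<otimes> p \<otimes> inv b) \<otimes> a" using e by simp
  also have "\<dots> = p \<otimes> (inv b \<otimes> a)" using a b p by (simp add: G.m_assoc)
  finally show "(inv b \<otimes> a) \<otimes> p = p \<otimes> (inv b \<otimes> a)" .
next
  assume e: "(inv b \<otimes> a) \<otimes> p = p \<otimes> (inv b \<otimes> a)"
  have "a \<otimes> p \<otimes> inv a = b \<otimes> ((inv b \<otimes> a) \<otimes> p) \<otimes> inv a" using a b p by (simp add: G.m_assoc)
  also have "\<dots> = b \<otimes> (p \<otimes> (inv b \<otimes> a)) \<otimes> inv a" using e by simp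
  also have "\<dots> = b \<otimes> p \<otimes> inv b" using a b p by (simp add: G.m_assoc)
  finally show "a \<otimes> p \<otimes> inv a = b \<otimes> p \<otimes> inv b" .
qed

lemma kernel_iff:
  assumes \<phi>: "\<phi> \<in> \<Phi>" and a: "a \<in> H" and b: "b \<in> H"
  shows "tail F deg G H (cj a \<phi>) = tail F deg G H (cj b \<phi>) \<longleftrightarrow>
         a <# phi_core F deg G H \<phi> = b <# phi_core F deg G H \<phi>"
proof -
  note \<phi>h = Phi_D[OF \<phi>]
  have pc: "\<And>f. f \<in> carrier F \<Longrightarrow> \<phi> f \<in> carrier G" using hom_in_carrier[OF \<phi>h] .
  have ac: "a \<in> carrier G" and bc: "b \<in> carrier G" using Hcar a b by auto
  define g where "g = inv b \<otimes> a"
  have gc: "g \<in> carrier G" using ac bc by (simp add: g_def)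
  have L1: "(\<forall>f\<in>carrier F. deg f = 0 \<longrightarrow> cj a \<phi> f = cj b \<phi> f) \<longleftrightarrow>
      (\<forall>c\<in>carrier F. deg c = 0 \<longrightarrow> g \<otimes> \<phi> c = \<phi> c \<otimes> g)"
    using A1[OF ac bc pc] by (simp add: cj_def g_def)
  have "cj a \<phi> f <# H = cj b \<phi> f <# H \<longleftrightarrow> inv (\<phi> f) \<otimes> g \<otimes> \<phi> f \<in> H" if f: "f \<in> carrier F" for f
  proof -
    have "cj a \<phi> f <# H = (a \<otimes> \<phi> f) <# H" "cj b \<phi> f <# H = (b \<otimes> \<phi> f) <# H"
      using f lcos_absorb Hinv a b ac bc pc[OF f] by (simp_all add: cj_def)
    moreover have "(a \<otimes> \<phi> f) <# H = (b \<otimes> \<phi> f) <# H \<longleftrightarrow> inv (b \<otimes> \<phi> f) \<otimes> (a \<otimes> \<phi> f) \<in> H"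
      using lcos_eq_iff[OF subH] ac bc pc[OF f] by simp
    moreover have "inv (b \<otimes> \<phi> f) \<otimes> (a \<otimes> \<phi> f) = inv (\<phi> f) \<otimes> g \<otimes> \<phi> f"
      using ac bc pc[OF f] by (simp add: g_def G.inv_mult_group G.m_assoc)
    ultimately show ?thesis by simp
  qed
  then have L2: "(\<forall>f\<in>carrier F. cj a \<phi> f <# H = cj b \<phi> f <# H) \<longleftrightarrow> (\<forall>f\<in>carrier F. inv (\<phi> f) \<otimes> g \<otimes> \<phi> f \<in> H)"
    by blast
  have M: "(\<forall>f\<in>carrier F. inv (\<phi> f) \<otimes> g \<otimes> \<phi> f \<in> H) \<longleftrightarrow> (\<forall>f\<in>carrier F. \<phi> f \<otimes> g \<otimes> inv (\<phi> f) \<in> H)"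
  proof -
    have pi: "\<And>f. f \<in> carrier F \<Longrightarrow> \<phi> (inv\<^bsub>F\<^esub> f) = inv (\<phi> f)" using group_hom.hom_inv[OF ghom[OF \<phi>h]] .
    show ?thesis
    proof
      assume h: "\<forall>f\<in>carrier F. inv (\<phi> f) \<otimes> g \<otimes> \<phi> f \<in> H"
      show "\<forall>f\<in>carrier F. \<phi> f \<otimes> g \<otimes> inv (\<phi> f) \<in> H"
      proof
        fix f assume f: "f \<in> carrier F"
        have "inv (\<phi> (inv\<^bsub>F\<^esub> f)) \<otimes> g \<otimes> \<phi> (inv\<^bsub>F\<^esub> f) \<in> H" using h f by simp
        then show "\<phi> f \<otimes> g \<otimes> inv (\<phi> f) \<in> H" using pi[OF f] pc[OF f] by simp
      qed
    next
      assume h: "\<forall>f\<in>carrier F. \<phi> f \<otimes> g \<otimes> inv (\<phi> f) \<in> H"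
      show "\<forall>f\<in>carrier F. inv (\<phi> f) \<otimes> g \<otimes> \<phi> f \<in> H"
      proof
        fix f assume f: "f \<in> carrier F"
        have "\<phi> (inv\<^bsub>F\<^esub> f) \<otimes> g \<otimes> inv (\<phi> (inv\<^bsub>F\<^esub> f)) \<in> H" using h f by simp
        then show "inv (\<phi> f) \<otimes> g \<otimes> \<phi> f \<in> H" using pi[OF f] pc[OF f] by simp
      qed
    qed
  qed
  have R: "a <# phi_core F deg G H \<phi> = b <# phi_core F deg G H \<phi> \<longleftrightarrow> g \<in> phi_core F deg G H \<phi>"
    using lcos_eq_iff[OF core_subgroup[OF \<phi>h] ac bc] by (simp add: g_def)
  show ?thesis
    unfolding R core_iff[OF \<phi>h] tail_eq_iff L1 L2 M using gc by blast
qed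

lemma cj_cj: "\<phi> \<in> extensional (carrier F) \<Longrightarrow> h \<in> carrier G \<Longrightarrow> \<phi> \<in> hom F G \<Longrightarrow> cj (inv h) (cj h \<phi>) = \<phi>"
proof (rule extensionalityI[of _ "carrier F"])
  show "cj (inv h) (cj h \<phi>) \<in> extensional (carrier F)" by (simp add: cj_def)
  fix f assume "\<phi> \<in> hom F G" "h \<in> carrier G" "f \<in> carrier F"
  then show "cj (inv h) (cj h \<phi>) f = \<phi> f" using hom_in_carrier[of \<phi> F G f] by (simp add: cj_def G.m_assoc)
qed

lemma core_cj_mem:
  assumes \<phi>: "\<phi> \<in> hom F G" and h: "h \<in> H" and y: "y \<in> phi_core F deg G H \<phi>"
  shows "h \<otimes> y \<otimes> inv h \<in> phi_core F deg G H (cj h \<phi>)"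
proof -
  have hc: "h \<in> carrier G" using Hcar[OF h] .
  have yc: "y \<in> carrier G" using core_D1[OF \<phi> y] .
  have pc: "\<And>f. f \<in> carrier F \<Longrightarrow> \<phi> f \<in> carrier G" using hom_in_carrier[OF \<phi>] .
  show ?thesis
  proof (rule core_I[OF cj_hom[OF \<phi> hc]])
    show "h \<otimes> y \<otimes> inv h \<in> carrier G" using hc yc by simp
    fix f assume f: "f \<in> carrier F"
    have "cj h \<phi> f \<otimes> (h \<otimes> y \<otimes> inv h) \<otimes> inv (cj h \<phi> f) = h \<otimes> (\<phi> f \<otimes> y \<otimes> inv (\<phi> f)) \<otimes> inv h"
      using f hc yc pc[OF f] by (simp add: cj_def G.inv_mult_group G.m_assoc)
    then show "cj h \<phi> f \<otimes> (h \<otimes> y \<otimes> inv h) \<otimes> inv (cj h \<phi> f) \<in> H"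
      using core_D2[OF \<phi> y f] h Hinv[OF h] Hmul by simp
  next
    fix c assume c: "c \<in> carrier F" "deg c = 0"
    have e: "y \<otimes> \<phi> c = \<phi> c \<otimes> y" using core_D3[OF \<phi> y c] .
    have "h \<otimes> y \<otimes> inv h \<otimes> cj h \<phi> c = h \<otimes> (y \<otimes> \<phi> c) \<otimes> inv h"
      using c hc yc pc[OF c(1)] by (simp add: cj_def G.m_assoc)
    also have "\<dots> = h \<otimes> (\<phi> c \<otimes> y) \<otimes> inv h" using e by simp
    also have "\<dots> = cj h \<phi> c \<otimes> (h \<otimes> y \<otimes> inv h)"
      using c hc yc pc[OF c(1)] by (simp add: cj_def G.m_assoc)
    finally show "h \<otimes> y \<otimes> inv h \<otimes> cj h \<phi> c = cj h \<phi> c \<otimes> (h \<otimes> y \<otimes> inv h)" .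
  qed
qed

lemma core_cj_eqpoll:
  assumes \<phi>: "\<phi> \<in> \<Phi>" and h: "h \<in> H"
  shows "phi_core F deg G H (cj h \<phi>) \<approx> phi_core F deg G H \<phi>"
proof -
  note \<phi>h = Phi_D[OF \<phi>]
  have hc: "h \<in> carrier G" using Hcar[OF h] .
  have cjh: "cj h \<phi> \<in> hom F G" using cj_hom[OF \<phi>h hc] .
  have bk: "inv h \<otimes> x \<otimes> h \<in> phi_core F deg G H \<phi>" if xm: "x \<in> phi_core F deg G H (cj h \<phi>)" for x
    using core_cj_mem[OF cjh Hinv[OF h] xm] cj_cj[OF Phi_E[OF \<phi>] hc \<phi>h] hc by simp
  have "bij_betw (\<lambda>x. inv h \<otimes> x \<otimes> h) (phi_core F deg G H (cj h \<phi>)) (phi_core F deg G H \<phi>)"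
  proof (rule bij_betw_byWitness[where f' = "\<lambda>y. h \<otimes> y \<otimes> inv h"])
    show "\<forall>x\<in>phi_core F deg G H (cj h \<phi>). h \<otimes> (inv h \<otimes> x \<otimes> h) \<otimes> inv h = x"
      using core_D1[OF cjh] hc by (simp add: G.m_assoc)
    show "\<forall>y\<in>phi_core F deg G H \<phi>. inv h \<otimes> (h \<otimes> y \<otimes> inv h) \<otimes> h = y"
      using core_D1[OF \<phi>h] hc by (simp add: G.m_assoc)
    show "(\<lambda>x. inv h \<otimes> x \<otimes> h) ` phi_core F deg G H (cj h \<phi>) \<subseteq> phi_core F deg G H \<phi>"
      using bk by blast
    show "(\<lambda>y. h \<otimes> y \<otimes> inv h) ` phi_core F deg G H \<phi> \<subseteq> phi_core F deg G H (cj h \<phi>)"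
      using core_cj_mem[OF \<phi>h h] by blast
  qed
  then show ?thesis unfolding eqpoll_def by blast
qed

lemma part2:
  assumes \<phi>: "\<phi> \<in> \<Phi>" and sim: "similar F deg G H \<phi> \<psi>"
  shows "{\<chi> \<in> \<Phi>. tail F deg G H \<chi> = tail F deg G H \<psi>} \<approx> phi_core F deg G H \<phi>"
proof -
  obtain h where h: "h \<in> H" and t: "tail F deg G H \<psi> = tail F deg G H (cj h \<phi>)"
    using sim sim_iff[OF \<phi>] by blast
  have "{\<chi> \<in> \<Phi>. tail F deg G H \<chi> = tail F deg G H \<psi>} = {\<chi> \<in> \<Phi>. tail F deg G H \<chi> = tail F deg G H (cj h \<phi>)}"
    using t by simp
  also have "\<dots> \<approx> phi_core F deg G H (cj h \<phi>)" using fiber_core[OF cj_Phi[OF h \<phi>]] .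
  also have "\<dots> \<approx> phi_core F deg G H \<phi>" using core_cj_eqpoll[OF \<phi> h] .
  finally show ?thesis .
qed

lemma tails_image:
  assumes \<phi>: "\<phi> \<in> \<Phi>"
  shows "tail F deg G H ` {\<psi> \<in> \<Phi>. similar F deg G H \<phi> \<psi>} = (\<lambda>h. tail F deg G H (cj h \<phi>)) ` H"
proof
  show "tail F deg G H ` {\<psi> \<in> \<Phi>. similar F deg G H \<phi> \<psi>} \<subseteq> (\<lambda>h. tail F deg G H (cj h \<phi>)) ` H"
    using sim_iff[OF \<phi>] by auto
  show "(\<lambda>h. tail F deg G H (cj h \<phi>)) ` H \<subseteq> tail F deg G H ` {\<psi> \<in> \<Phi>. similar F deg G H \<phi> \<psi>}"
  proof (rule image_subsetI)
    fix h assume h: "h \<in> H"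
    have "cj h \<phi> \<in> {\<psi> \<in> \<Phi>. similar F deg G H \<phi> \<psi>}" using cj_Phi[OF h \<phi>] sim_iff[OF \<phi>] h by blast
    then show "tail F deg G H (cj h \<phi>) \<in> tail F deg G H ` {\<psi> \<in> \<Phi>. similar F deg G H \<phi> \<psi>}" by blast
  qed
qed

lemma part1:
  assumes \<phi>: "\<phi> \<in> \<Phi>"
  shows "tail F deg G H ` {\<psi> \<in> \<Phi>. similar F deg G H \<phi> \<psi>} \<approx> lcosets_in G H (phi_core F deg G H \<phi>)"
proof -
  have "lcosets_in G H (phi_core F deg G H \<phi>) = (\<lambda>h. h <# phi_core F deg G H \<phi>) ` H"
    unfolding lcosets_in_def by blast
  moreover have "(\<lambda>h. tail F deg G H (cj h \<phi>)) ` H \<approx> (\<lambda>h. h <# phi_core F deg G H \<phi>) ` H"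
    by (rule same_kernel_eqpoll) (rule kernel_iff[OF \<phi>])
  ultimately show ?thesis using tails_image[OF \<phi>] by simp
qed

lemma H_eqpoll:
  assumes K: "subgroup K G" and KH: "K \<subseteq> H"
  shows "H \<approx> (\<lambda>h. h <# K) ` H \<times> K"
proof (rule fiber_eqpoll)
  fix b assume "b \<in> (\<lambda>h. h <# K) ` H"
  then obtain h where h: "h \<in> H" "b = h <# K" by blast
  have hc: "h \<in> carrier G" using Hcar[OF h(1)] .
  have Kc: "\<And>u. u \<in> K \<Longrightarrow> u \<in> carrier G" by (rule subgroup.mem_carrier[OF K])
  have "{x \<in> H. x <# K = b} = (\<lambda>u. h \<otimes> u) ` K"
  proof
    show "{x \<in> H. x <# K = b} \<subseteq> (\<lambda>u. h \<otimes> u) ` K"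
    proof
      fix x assume "x \<in> {x \<in> H. x <# K = b}"
      then have x: "x \<in> H" "x <# K = h <# K" using h by auto
      have xc: "x \<in> carrier G" using Hcar[OF x(1)] .
      have "inv h \<otimes> x \<in> K" using lcos_eq_iff[OF K xc hc] x(2) by simp
      moreover have "x = h \<otimes> (inv h \<otimes> x)" using hc xc by (simp add: G.m_assoc[symmetric])
      ultimately show "x \<in> (\<lambda>u. h \<otimes> u) ` K" by blast
    qed
    show "(\<lambda>u. h \<otimes> u) ` K \<subseteq> {x \<in> H. x <# K = b}"
    proof
      fix x assume "x \<in> (\<lambda>u. h \<otimes> u) ` K"
      then obtain u where u: "u \<in> K" "x = h \<otimes> u" by blast
      have uc: "u \<in> carrier G" using Kc[OF u(1)] .
      have "x \<in> H" using u KH h Hmul by blast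
      moreover have "x <# K = h <# K" using lcos_eq_iff[OF K, of x h] u hc uc by (simp add: G.m_assoc[symmetric])
      ultimately show "x \<in> {x \<in> H. x <# K = b}" using h by simp
    qed
  qed
  moreover have "(\<lambda>u. h \<otimes> u) ` K \<approx> K"
  proof (rule inj_on_image_eqpoll_self)
    show "inj_on (\<lambda>u. h \<otimes> u) K"
    proof (rule inj_onI)
      fix u v assume uv: "u \<in> K" "v \<in> K" "h \<otimes> u = h \<otimes> v"
      then have "inv h \<otimes> (h \<otimes> u) = inv h \<otimes> (h \<otimes> v)" by simp
      then show "u = v" using hc Kc[OF uv(1)] Kc[OF uv(2)] by simp
    qed
  qed
  ultimately show "{x \<in> H. x <# K = b} \<approx> K" by simp
qed

lemma part0:
  assumes \<phi>: "\<phi> \<in> \<Phi>"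
  shows "{\<psi> \<in> \<Phi>. similar F deg G H \<phi> \<psi>} \<approx> H"
proof -
  let ?C = "{\<psi> \<in> \<Phi>. similar F deg G H \<phi> \<psi>}"
  let ?K = "phi_core F deg G H \<phi>"
  have "?C \<approx> tail F deg G H ` ?C \<times> ?K"
  proof (rule fiber_eqpoll)
    fix b assume "b \<in> tail F deg G H ` ?C"
    then obtain \<psi> where \<psi>: "\<psi> \<in> ?C" "b = tail F deg G H \<psi>" by blast
    obtain h where h: "h \<in> H" "tail F deg G H \<psi> = tail F deg G H (cj h \<phi>)"
      using \<psi> sim_iff[OF \<phi>] by blast
    have "{\<chi> \<in> ?C. tail F deg G H \<chi> = b} = {\<chi> \<in> \<Phi>. tail F deg G H \<chi> = tail F deg G H \<psi>}"
      using \<psi> h sim_iff[OF \<phi>] by auto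
    then show "{\<chi> \<in> ?C. tail F deg G H \<chi> = b} \<approx> ?K" using part2[OF \<phi>] \<psi> by simp
  qed
  also have "\<dots> \<approx> lcosets_in G H ?K \<times> ?K" using times_eqpoll_cong[OF part1[OF \<phi>] eqpoll_refl] .
  also have "lcosets_in G H ?K = (\<lambda>h. h <# ?K) ` H" unfolding lcosets_in_def by blast
  also have "(\<lambda>h. h <# ?K) ` H \<times> ?K \<approx> H"
    using H_eqpoll[OF core_subgroup[OF Phi_D[OF \<phi>]] core_sub[OF Phi_D[OF \<phi>]]] eqpoll_sym by blast
  finally show ?thesis .
qed

end

theorem mainTheorem11:
  fixes F :: "('f, 'm) monoid_scheme" and deg :: "'f \<Rightarrow> int"
    and G :: "('g, 'n) monoid_scheme" and H :: "'g set"
    and \<Phi> :: "('f \<Rightarrow> 'g) set"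
  assumes idx: "indexed_group F deg"
    and grpG: "group G"
    and subH: "subgroup H G"
    and Phi_hom: "\<Phi> \<subseteq> hom F G \<inter> extensional (carrier F)"
    and I: "\<And>h \<phi>. h \<in> H \<Longrightarrow> \<phi> \<in> \<Phi> \<Longrightarrow>
              restrict (\<lambda>f. inv\<^bsub>G\<^esub> h \<otimes>\<^bsub>G\<^esub> \<phi> f \<otimes>\<^bsub>G\<^esub> h) (carrier F) \<in> \<Phi>"
    and II: "\<And>\<phi> h \<psi> f1. \<phi> \<in> \<Phi> \<Longrightarrow> h \<in> phi_core F deg G H \<phi> \<Longrightarrow>
              \<psi> \<in> hom F G \<inter> extensional (carrier F) \<Longrightarrow>
              (\<forall>f\<in>carrier F. deg f = 0 \<longrightarrow> \<psi> f = \<phi> f) \<Longrightarrow>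
              f1 \<in> carrier F \<Longrightarrow> deg f1 = 1 \<Longrightarrow> \<psi> f1 = \<phi> f1 \<otimes>\<^bsub>G\<^esub> h \<Longrightarrow> \<psi> \<in> \<Phi>"
  shows "\<forall>\<phi>\<in>\<Phi>.
           {\<psi> \<in> \<Phi>. similar F deg G H \<phi> \<psi>} \<approx> H
         \<and> tail F deg G H ` {\<psi> \<in> \<Phi>. similar F deg G H \<phi> \<psi>}
             \<approx> lcosets_in G H (phi_core F deg G H \<phi>)
         \<and> (\<forall>\<psi>\<in>\<Phi>. similar F deg G H \<phi> \<psi> \<longrightarrow>
              {\<chi> \<in> \<Phi>. tail F deg G H \<chi> = tail F deg G H \<psi>} \<approx> phi_core F deg G H \<phi>)"
proof -
  have idx': "group F \<and> deg \<in> hom F integer_group \<and> deg ` carrier F = UNIV"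
    using idx unfolding indexed_group_def .
  have grpF: "group F" using idx' by (rule conjunct1)
  have degh: "deg \<in> hom F integer_group" using idx' by (rule conjunct1[OF conjunct2])
  have surj: "deg ` carrier F = UNIV" using idx' by (rule conjunct2[OF conjunct2])
  have "(1::int) \<in> deg ` carrier F" unfolding surj by (rule UNIV_I)
  then obtain f1 where f1: "f1 \<in> carrier F" "deg f1 = 1" by (rule imageE) (rule that, assumption, rule sym)
  interpret S G F deg H \<Phi> f1
    by (rule S.intro[OF grpG grpF S_axioms.intro[OF degh f1(1) f1(2) subH Phi_hom I II]])
  show ?thesis
  proof (intro ballI conjI impI)
    fix \<phi> assume \<phi>: "\<phi> \<in> \<Phi>"
    show "{\<psi> \<in> \<Phi>. similar F deg G H \<phi> \<psi>} \<approx> H" using part0[OF \<phi>] .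
    show "tail F deg G H ` {\<psi> \<in> \<Phi>. similar F deg G H \<phi> \<psi>} \<approx> lcosets_in G H (phi_core F deg G H \<phi>)"
      using part1[OF \<phi>] .
    fix \<psi> assume "\<psi> \<in> \<Phi>" "similar F deg G H \<phi> \<psi>"
    show "{\<chi> \<in> \<Phi>. tail F deg G H \<chi> = tail F deg G H \<psi>} \<approx> phi_core F deg G H \<phi>"
      using part2[OF \<phi> \<open>similar F deg G H \<phi> \<psi>\<close>] .
  qed
qed

end
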